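(* Let $p\in\mathbb{R}^n$, let $u_p\in\mathcal W\cap L^{\frac{n}{n-2s_1}}(Q)$ be a minimizer of $\mathcal E_p$ over $\mathcal W$ with $\mathcal E_p(u_p)<\infty$, and let $z:\mathbb{R}^n\times\mathbb{R}^n\to[-1,1]$ be a measurable function satisfying: (a) $\iint_{Q\times\mathbb{R}^n}\tfrac12 z(x,y)(\eta(x)-\eta(y))K(x,y)\,dx\,dy+\int_Q g\eta=0$ for every $\mathbb{Z}^n$-periodic $\eta\in C^\infty(\mathbb{R}^n)$; (b) $u_p(x)-u_p(y)+p\cdot(x-y)=z(x,y)|u_p(x)-u_p(y)+p\cdot(x-y)|$ a.e.; (c) $z(x,y)=-z(y,x)$ a.e.; (d) $z(x+k,y+k)=z(x,y)$ for all $k\in\mathbb{Z}^n$, a.e. (such $z$ exists). Then for every $\eta\in C^\infty_c(\mathbb{R}^n)$, $$\iint_{\mathbb{R}^n\times\mathbb{R}^n}\tfrac12 z(x,y)(\eta(x)-\eta(y))K(x,y)\,dx\,dy+\int_{\mathbb{R}^n}g(x)\eta(x)\,dx=0.$$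
   Context: Standing assumptions: $n\ge2$, $Q=(0,1)^n$. The kernel $K:\mathbb{R}^n\times\mathbb{R}^n\to[0,\infty)$ is measurable and satisfies: (K1) $K(y,x)=K(x,y)=K(x+w,y+w)=K(Rx,Ry)$ for all $x,y,w\in\mathbb{R}^n$ and all $R\in SO(n)$; (K2) $\int_{\mathbb{R}^n}|h|\,K(h,0)\,dh<\infty$; (K3) there are constants $0<s_1<\tfrac12<s_2<1$, $\delta>0$ and $0<\kappa_1\le\kappa_2$ such that $\kappa_1\,\chi_{(0,\delta)}(|x-y|)\,|x-y|^{-n-2s_1}\le K(x,y)\le\kappa_2\min\{|x-y|^{-n-2s_1},|x-y|^{-n-2s_2}\}$ for all $x\neq y$; (K4) $\inf_{(x,y)\in Q\times Q}K(x,y)\ge\kappa_3$ for some constant $\kappa_3>0$. The forcing term $g\in L^\infty(\mathbb{R}^n)$ is $\mathbb{Z}^n$-periodic with $\int_Q g(x)\,dx=0$. Cell problem: $\mathcal W=\{u\in L^1_{\rm loc}(\mathbb{R}^n):\ u \text{ is } \mathbb{Z}^n\text{-periodic},\ \int_Q u=0\}$, and for $p\in\mathbb{R}^n$, $\mathcal E_p(u)=\iint_{Q\times\mathbb{R}^n}\tfrac12|u(x)-u(y)+p\cdot(x-y)|\,K(x,y)\,dx\,dy+\int_Q g(x)u(x)\,dx$. *)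

theory Defs
  imports "HOL-Analysis.Analysis"
begin

definition cubeQ :: "(real^'n) set" where
  "cubeQ = {x. \<forall>i. 0 < x$i \<and> x$i < 1}"

definition intvecs :: "(real^'n) set" where
  "intvecs = {k. \<forall>i. k$i \<in> \<int>}"

abbreviation M2 :: "((real^'n) \<times> (real^'n)) measure" where
  "M2 \<equiv> lborel \<Otimes>\<^sub>M lborel"

text \<open>C-infinity functions R^n -> R: differentiable everywhere with all partial
  derivatives again C-infinity (greatest fixed point = derivatives of all orders).\<close>
coinductive smooth_fun :: "(real^'n \<Rightarrow> real) \<Rightarrow> bool" where
  "(\<forall>x. f differentiable (at x)) \<Longrightarrow>
   (\<forall>i\<in>(Basis :: (real^'n) set). smooth_fun (\<lambda>x. frechet_derivative f (at x) i)) \<Longrightarrow>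
   smooth_fun f"

definition periodic_ae :: "(real^'n \<Rightarrow> real) \<Rightarrow> bool" where
  "periodic_ae u \<longleftrightarrow> (\<forall>k\<in>intvecs. AE x in lborel. u (x + k) = u x)"

definition cellW :: "(real^'n \<Rightarrow> real) set" where
  "cellW = {u. u \<in> borel_measurable lborel \<and>
               (\<forall>C. compact C \<longrightarrow> set_integrable lborel C u) \<and>
               periodic_ae u \<and> (LINT x:cubeQ|lborel. u x) = 0}"

definition energy :: "(real^'n \<Rightarrow> real^'n \<Rightarrow> real) \<Rightarrow> (real^'n \<Rightarrow> real) \<Rightarrow> real^'n
     \<Rightarrow> (real^'n \<Rightarrow> real) \<Rightarrow> ereal" where
  "energy K g p u =
     enn2ereal (\<integral>\<^sup>+ w. ennreal (1/2 * \<bar>u (fst w) - u (snd w) + p \<bullet> (fst w - snd w)\<bar>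
                    * K (fst w) (snd w)) * indicator (cubeQ \<times> UNIV) w \<partial>M2)
     + ereal (LINT x:cubeQ|lborel. g x * u x)"

end

theory Submission
  imports Defs
begin


lemma intvecs_add: "a \<in> intvecs \<Longrightarrow> b \<in> intvecs \<Longrightarrow> a + b \<in> intvecs"
  by (auto simp: intvecs_def)
lemma intvecs_diff: "a \<in> intvecs \<Longrightarrow> b \<in> intvecs \<Longrightarrow> a - b \<in> intvecs"
  by (auto simp: intvecs_def)
lemma intvecs_uminus: "a \<in> intvecs \<Longrightarrow> - a \<in> intvecs"
  by (auto simp: intvecs_def)
lemma intvecs_0: "0 \<in> intvecs"
  by (auto simp: intvecs_def)

lemma intvecs_image: "(intvecs :: (real^'a) set) = (\<lambda>f. \<chi> i. f i) ` (PiE UNIV (\<lambda>_. \<int>))"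
proof
  show "(intvecs :: (real^'a) set) \<subseteq> (\<lambda>f. \<chi> i. f i) ` (PiE UNIV (\<lambda>_. \<int>))"
  proof
    fix k :: "real^'a" assume "k \<in> intvecs"
    then have "(\<lambda>i. k $ i) \<in> PiE UNIV (\<lambda>_. \<int>)" by (auto simp: intvecs_def)
    moreover have "k = (\<chi> i. (\<lambda>i. k $ i) i)" by simp
    ultimately show "k \<in> (\<lambda>f. \<chi> i. f i) ` (PiE UNIV (\<lambda>_. \<int>))" by blast
  qed
  show "(\<lambda>f. \<chi> i. f i) ` (PiE UNIV (\<lambda>_. \<int>)) \<subseteq> (intvecs :: (real^'a) set)"
    by (auto simp: intvecs_def)
qed

lemma countable_intvecs: "countable intvecs"
proof -
  have "countable (\<int> :: real set)" unfolding Ints_def by simp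
  then show ?thesis unfolding intvecs_image by (intro countable_image countable_PiE) auto
qed

lemma infinite_intvecs: "infinite (intvecs :: (real^'a) set)"
proof
  assume "finite (intvecs :: (real^'a) set)"
  moreover have "inj (\<lambda>m::nat. (\<chi> i. real m) :: real^'a)"
    by (auto simp: inj_on_def vec_eq_iff)
  moreover have "range (\<lambda>m::nat. (\<chi> i. real m) :: real^'a) \<subseteq> intvecs"
    by (auto simp: intvecs_def)
  ultimately show False
    by (meson finite_imageD finite_subset infinite_UNIV_char_0)
qed

lemma finite_intvecs_bounded:
  assumes "bounded S" shows "finite (intvecs \<inter> (S :: (real^'a) set))"
proof -
  obtain R where R: "\<And>x. x \<in> S \<Longrightarrow> norm x \<le> R" using assms bounded_iff by blast
  have fin: "finite (\<int> \<inter> {-R..R})"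
  proof -
    have "\<int> \<inter> {-R..R} \<subseteq> of_int ` {-\<lceil>R\<rceil>..\<lceil>R\<rceil>}"
    proof
      fix x assume x: "x \<in> \<int> \<inter> {-R..R}"
      then obtain m where m: "x = of_int m" by (auto elim: Ints_cases)
      have "real_of_int (-m) \<le> R" using x m by auto
      then have "\<lceil>real_of_int (-m)\<rceil> \<le> \<lceil>R\<rceil>" by (rule ceiling_mono)
      then have "- \<lceil>R\<rceil> \<le> m" by (simp only: ceiling_of_int)
      moreover have "m \<le> \<lceil>R\<rceil>" using x m by (auto simp add: le_ceiling_iff)
      ultimately show "x \<in> of_int ` {-\<lceil>R\<rceil>..\<lceil>R\<rceil>}" using m by auto
    qed
    then show ?thesis by (metis finite_subset finite_imageI finite_atLeastAtMost_int)
  qed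
  have "intvecs \<inter> S \<subseteq> (\<lambda>f. \<chi> i. f i) ` (PiE UNIV (\<lambda>_. \<int> \<inter> {-R..R}))"
  proof
    fix k :: "real^'a" assume k: "k \<in> intvecs \<inter> S"
    have "\<bar>k $ i\<bar> \<le> R" for i using R[of k] k component_le_norm_cart[of k i] by auto
    then have "-R \<le> k $ i \<and> k $ i \<le> R" for i by (metis abs_le_iff minus_le_iff)
    then have "(\<lambda>i. k $ i) \<in> PiE UNIV (\<lambda>_. \<int> \<inter> {-R..R})" using k by (auto simp: intvecs_def)
    moreover have "k = (\<chi> i. (\<lambda>i. k $ i) i)" by simp
    ultimately show "k \<in> (\<lambda>f. \<chi> i. f i) ` (PiE UNIV (\<lambda>_. \<int> \<inter> {-R..R}))" by blast
  qed
  moreover have "finite ((\<lambda>f. (\<chi> i. f i)::real^'a) ` (PiE UNIV (\<lambda>_. \<int> \<inter> {-R..R})))"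
    using fin by (intro finite_imageI finite_PiE) auto
  ultimately show ?thesis by (rule finite_subset)
qed

definition enum_iv :: "nat \<Rightarrow> real^'a" where "enum_iv = from_nat_into intvecs"

lemma bij_enum_iv: "bij_betw enum_iv UNIV intvecs"
  unfolding enum_iv_def by (rule bij_betw_from_nat_into[OF countable_intvecs infinite_intvecs])

lemma enum_iv_in: "enum_iv i \<in> intvecs"
  using bij_enum_iv by (auto simp: bij_betw_def)

lemma sums_enum_iv:
  fixes h :: "real^'a \<Rightarrow> 'b::{real_normed_vector}"
  assumes fin: "finite {k\<in>intvecs. h k \<noteq> 0}"
  shows "(\<lambda>i. h (enum_iv i)) sums (\<Sum>k\<in>{k\<in>intvecs. h k \<noteq> 0}. h k)"
proof -
  let ?A = "{k\<in>intvecs. h k \<noteq> 0}"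
  let ?N = "enum_iv -` ?A"
  have inj: "inj enum_iv" using bij_enum_iv by (auto simp: bij_betw_def)
  have finN: "finite ?N" using fin inj by (intro finite_vimageI)
  have im: "enum_iv ` ?N = ?A" using bij_enum_iv by (auto simp: bij_betw_def)
  have "(\<lambda>i. h (enum_iv i)) sums (\<Sum>i\<in>?N. h (enum_iv i))"
    by (rule sums_finite[OF finN]) (auto simp: enum_iv_in)
  moreover have "(\<Sum>k\<in>?A. h k) = (\<Sum>k\<in>enum_iv ` ?N. h k)" using im by simp
  moreover have "(\<Sum>k\<in>enum_iv ` ?N. h k) = (\<Sum>i\<in>?N. h (enum_iv i))"
    using inj by (subst sum.reindex) (auto simp: inj_on_def)
  ultimately show ?thesis by simp
qed

definition per :: "(real^'a \<Rightarrow> real) \<Rightarrow> real^'a \<Rightarrow> real" where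
  "per f x = (\<Sum>k\<in>{k\<in>intvecs. f (x + k) \<noteq> 0}. f (x + k))"

lemma per_finite:
  fixes f :: "real^'a \<Rightarrow> real"
  assumes "bounded {x. f x \<noteq> 0}" shows "finite {k\<in>intvecs. f (x + k) \<noteq> 0}"
proof -
  have "{k\<in>intvecs. f (x + k) \<noteq> 0} \<subseteq> intvecs \<inter> ((\<lambda>y. y - x) ` {x. f x \<noteq> 0})"
    by (auto intro!: image_eqI[where x="x + _"])
  moreover have "bounded ((\<lambda>y. y - x) ` {x. (f::real^'a\<Rightarrow>real) x \<noteq> 0})"
    using bounded_translation[OF assms, of "-x"] by (simp add: image_image)
  ultimately show ?thesis using finite_intvecs_bounded finite_subset by blast
qed

lemma per_eq_sum:
  assumes "finite N" "N \<subseteq> intvecs" "{k\<in>intvecs. f (x + k) \<noteq> 0} \<subseteq> N"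
  shows "per f x = (\<Sum>k\<in>N. f (x + k))"
  unfolding per_def using assms by (intro sum.mono_neutral_left) auto

lemma per_periodic:
  assumes "k0 \<in> intvecs" shows "per f (x + k0) = per f x"
proof -
  have eq: "{k\<in>intvecs. f (x + k0 + k) \<noteq> 0} = (\<lambda>k. k - k0) ` {k\<in>intvecs. f (x + k) \<noteq> 0}"
  proof safe
    fix k assume "k \<in> intvecs" "f (x + k0 + k) \<noteq> 0"
    then show "k \<in> (\<lambda>k. k - k0) ` {k \<in> intvecs. f (x + k) \<noteq> 0}"
      using assms by (intro image_eqI[where x="k + k0"]) (auto simp: intvecs_add add_ac)
  qed (use assms in \<open>auto simp: intvecs_diff add_ac\<close>)
  show ?thesis unfolding per_def eq
    by (subst sum.reindex) (auto simp: inj_on_def add_ac)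
qed

lemma per_sums:
  fixes f :: "real^'a \<Rightarrow> real"
  assumes "bounded {x. f x \<noteq> 0}" shows "(\<lambda>i. f (x + enum_iv i)) sums per f x"
  unfolding per_def by (rule sums_enum_iv[OF per_finite[OF assms]])



lemma smooth_differentiable: "smooth_fun f \<Longrightarrow> f differentiable (at x)"
  by (erule smooth_fun.cases) auto

lemma smooth_deriv: "smooth_fun f \<Longrightarrow> i \<in> Basis \<Longrightarrow> smooth_fun (\<lambda>x. frechet_derivative f (at x) i)"
  by (erule smooth_fun.cases) auto

lemma deriv_zero_outside:
  fixes f :: "real^'a \<Rightarrow> real"
  assumes "x \<notin> closure {x. f x \<noteq> 0}"
  shows "frechet_derivative f (at x) = (\<lambda>_. 0)"
proof -
  let ?U = "- closure {x. f x \<noteq> 0}"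
  have "((\<lambda>_. 0) has_derivative (\<lambda>_. 0)) (at x)" by simp
  then have "(f has_derivative (\<lambda>_. 0)) (at x)"
  proof (rule has_derivative_transform_within_open[where s="?U"])
    fix y assume "y \<in> ?U"
    then have "y \<notin> {x. f x \<noteq> 0}" using closure_subset[of "{x. f x \<noteq> 0}"] by blast
    then show "0 = f y" by simp
  next
    show "open ?U" by (simp add: open_Compl)
  next
    show "x \<in> ?U" using assms by simp
  qed
  then show ?thesis by (rule frechet_derivative_at[symmetric])
qed

lemma deriv_support:
  fixes f :: "real^'a \<Rightarrow> real"
  shows "closure {x. frechet_derivative f (at x) i \<noteq> 0} \<subseteq> closure {x. f x \<noteq> 0}"
proof (rule closure_minimal)
  show "{x. frechet_derivative f (at x) i \<noteq> 0} \<subseteq> closure {x. f x \<noteq> 0}"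
  proof
    fix y assume y: "y \<in> {x. frechet_derivative f (at x) i \<noteq> 0}"
    show "y \<in> closure {x. f x \<noteq> 0}"
    proof (rule ccontr)
      assume "y \<notin> closure {x. f x \<noteq> 0}"
      then have "frechet_derivative f (at y) = (\<lambda>_. 0)" by (rule deriv_zero_outside)
      with y show False by simp
    qed
  qed
qed simp

lemma compact_deriv_support:
  fixes f :: "real^'a \<Rightarrow> real"
  assumes "compact (closure {x. f x \<noteq> 0})"
  shows "compact (closure {x. frechet_derivative f (at x) i \<noteq> 0})"
  using compact_Int_closed[OF assms closed_closure, of "{x. frechet_derivative f (at x) i \<noteq> 0}"]
    deriv_support[of f i] by (simp add: Int_absorb1)

lemma per_local:
  fixes f :: "real^'a \<Rightarrow> real" and x :: "real^'a"
  assumes cpt: "compact (closure {x. f x \<noteq> 0})"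
  defines "N \<equiv> {k\<in>intvecs. \<exists>s\<in>closure {x. f x \<noteq> 0}. dist (x + k) s < 1}"
  shows "finite N" "N \<subseteq> intvecs"
    and "\<And>y. dist y x < 1 \<Longrightarrow> {k\<in>intvecs. f (y + k) \<noteq> 0} \<subseteq> N"
proof -
  let ?S = "closure {x. f x \<noteq> 0}"
  have "bounded ?S" using cpt compact_imp_bounded by blast
  then obtain R where R: "\<And>s. s \<in> ?S \<Longrightarrow> norm s \<le> R" using bounded_iff by blast
  have "N \<subseteq> intvecs \<inter> cball 0 (R + 1 + norm x)"
  proof
    fix k assume "k \<in> N"
    then obtain s where s: "s \<in> ?S" "dist (x + k) s < 1" and k: "k \<in> intvecs" unfolding N_def by auto
    have e: "(x + k - s) + s - x = k" by simp
    have "norm ((x + k - s) + s - x) \<le> norm (x + k - s) + norm s + norm x"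
      using norm_triangle_ineq4[of "(x + k - s) + s" x] norm_triangle_ineq[of "x + k - s" s] by linarith
    then have "norm k \<le> norm (x + k - s) + norm s + norm x" by (simp only: e)
    then have "norm k \<le> 1 + R + norm x" using s R[OF s(1)] by (simp add: dist_norm)
    then show "k \<in> intvecs \<inter> cball 0 (R + 1 + norm x)" using k by (simp add: dist_norm)
  qed
  then show "finite N" using finite_intvecs_bounded[of "cball 0 (R + 1 + norm x)"]
    by (meson bounded_cball finite_subset)
  show "N \<subseteq> intvecs" unfolding N_def by auto
  fix y :: "real^'a" assume y: "dist y x < 1"
  show "{k\<in>intvecs. f (y + k) \<noteq> 0} \<subseteq> N"
  proof safe
    fix k assume k: "k \<in> intvecs" "f (y + k) \<noteq> 0"
    then have "y + k \<in> ?S" using closure_subset[of "{x. f x \<noteq> 0}"] by blast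
    moreover have "dist (x + k) (y + k) < 1" using y by (simp add: dist_norm norm_minus_commute)
    ultimately show "k \<in> N" using k unfolding N_def by blast
  qed
qed

lemma per_has_derivative:
  fixes f :: "real^'a \<Rightarrow> real"
  assumes sm: "smooth_fun f" and cpt: "compact (closure {x. f x \<noteq> 0})"
  shows "(per f has_derivative (\<lambda>h. per (\<lambda>y. frechet_derivative f (at y) h) x)) (at x)"
proof -
  define N where "N = {k\<in>intvecs. \<exists>s\<in>closure {x. f x \<noteq> 0}. dist (x + k) s < 1}"
  note loc = per_local[OF cpt, where x=x, folded N_def]
  have d: "((\<lambda>y. f (y + k)) has_derivative frechet_derivative f (at (x + k))) (at x)" for k
  proof -
    have "(f has_derivative frechet_derivative f (at (x + k))) (at (x + k))"
      using smooth_differentiable[OF sm] frechet_derivative_works by blast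
    moreover have "((\<lambda>y. y + k) has_derivative (\<lambda>h. h)) (at x)"
      by (auto intro!: derivative_eq_intros)
    ultimately show ?thesis
      using has_derivative_compose[of "\<lambda>y. y + k" "\<lambda>h. h" x UNIV f] by (simp add: o_def)
  qed
  have "((\<lambda>y. \<Sum>k\<in>N. f (y + k)) has_derivative (\<lambda>h. \<Sum>k\<in>N. frechet_derivative f (at (x + k)) h)) (at x)"
    by (rule has_derivative_sum) (rule d)
  then have D: "(per f has_derivative (\<lambda>h. \<Sum>k\<in>N. frechet_derivative f (at (x + k)) h)) (at x)"
  proof (rule has_derivative_transform_within_open[where s="ball x 1"])
    fix y assume "y \<in> ball x 1"
    then have "dist y x < 1" by (simp add: dist_commute)
    then show "(\<Sum>k\<in>N. f (y + k)) = per f y" using per_eq_sum[OF loc(1,2) loc(3)] by simp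
  qed auto
  have "(\<Sum>k\<in>N. frechet_derivative f (at (x + k)) h) = per (\<lambda>y. frechet_derivative f (at y) h) x" for h
  proof (rule per_eq_sum[symmetric, OF loc(1,2)])
    show "{k \<in> intvecs. frechet_derivative f (at (x + k)) h \<noteq> 0} \<subseteq> N"
    proof safe
      fix k assume k: "k \<in> intvecs" "frechet_derivative f (at (x + k)) h \<noteq> 0"
      then have "x + k \<in> closure {x. f x \<noteq> 0}"
      proof (rule_tac ccontr)
        assume "x + k \<notin> closure {x. f x \<noteq> 0}"
        then have "frechet_derivative f (at (x + k)) = (\<lambda>_. 0)" by (rule deriv_zero_outside)
        with k show False by simp
      qed
      then show "k \<in> N" using k unfolding N_def by (intro CollectI conjI bexI[of _ "x + k"]) auto
    qed
  qed
  with D show ?thesis by simp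
qed

lemma per_smooth:
  fixes f :: "real^'a \<Rightarrow> real"
  assumes "smooth_fun f" "compact (closure {x. f x \<noteq> 0})"
  shows "smooth_fun (per f)"
proof -
  define X where "X = (\<lambda>g. \<exists>f. g = per f \<and> smooth_fun f \<and> compact (closure {x::real^'a. f x \<noteq> 0}))"
  have "X (per f)" using assms unfolding X_def by blast
  then show ?thesis
  proof (rule smooth_fun.coinduct[of X])
    fix g assume "X g"
    then obtain f where g: "g = per f" and sm: "smooth_fun f" and cpt: "compact (closure {x. f x \<noteq> 0})"
      unfolding X_def by blast
    have der: "frechet_derivative g (at x) = (\<lambda>h. per (\<lambda>y. frechet_derivative f (at y) h) x)" for x
      using per_has_derivative[OF sm cpt, of x] g frechet_derivative_at by metis
    have "\<forall>x. g differentiable at x"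
      using per_has_derivative[OF sm cpt] g unfolding differentiable_def by blast
    moreover have "X (\<lambda>x. frechet_derivative g (at x) i)" if "i \<in> Basis" for i
      unfolding X_def der
      by (rule exI[where x="\<lambda>y. frechet_derivative f (at y) i"])
         (use smooth_deriv[OF sm that] compact_deriv_support[OF cpt] in auto)
    ultimately show "\<exists>f. g = f \<and> (\<forall>x. f differentiable at x) \<and>
           (\<forall>i\<in>Basis. X (\<lambda>x. frechet_derivative f (at x) i) \<or> smooth_fun (\<lambda>x. frechet_derivative f (at x) i))"
      by blast
  qed
qed



lemma deriv_comp_bounded:
  fixes f :: "real^'a \<Rightarrow> real"
  assumes sm: "smooth_fun f" and cpt: "compact (closure {x. f x \<noteq> 0})" and i: "i \<in> Basis"
  shows "bounded (range (\<lambda>x. frechet_derivative f (at x) i))"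
proof -
  let ?D = "\<lambda>x. frechet_derivative f (at x) i"
  let ?S = "closure {x. f x \<noteq> 0}"
  have "\<forall>x. ?D differentiable (at x)" using smooth_differentiable[OF smooth_deriv[OF sm i]] by blast
  then have "continuous_on UNIV ?D"
    using differentiable_imp_continuous_within continuous_at_imp_continuous_on by blast
  then have "compact (?D ` ?S)" using compact_continuous_image cpt continuous_on_subset by blast
  then have "bounded (insert 0 (?D ` ?S))" using compact_imp_bounded by auto
  moreover have "range ?D \<subseteq> insert 0 (?D ` ?S)"
  proof
    fix y assume "y \<in> range ?D"
    then obtain x where x: "y = ?D x" by blast
    show "y \<in> insert 0 (?D ` ?S)"
    proof (cases "x \<in> ?S")
      case False
      then have "frechet_derivative f (at x) = (\<lambda>_. 0)" by (rule deriv_zero_outside)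
      then show ?thesis using x by simp
    qed (use x in auto)
  qed
  ultimately show ?thesis using bounded_subset by blast
qed

lemma smooth_lipschitz:
  fixes f :: "real^'a \<Rightarrow> real"
  assumes sm: "smooth_fun f" and cpt: "compact (closure {x. f x \<noteq> 0})"
  shows "\<exists>C. \<forall>x y. \<bar>f x - f y\<bar> \<le> C * dist x y"
proof -
  have "bounded (\<Union>i\<in>Basis. range (\<lambda>x. frechet_derivative f (at x) i))"
    using deriv_comp_bounded[OF sm cpt] by (simp add: bounded_UN)
  then obtain B where B: "\<And>i x. i \<in> Basis \<Longrightarrow> \<bar>frechet_derivative f (at x) i\<bar> \<le> B"
    unfolding bounded_iff by fastforce
  define C where "C = real DIM(real^'a) * B"
  have der: "(f has_derivative frechet_derivative f (at x)) (at x)" for x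
    using smooth_differentiable[OF sm] frechet_derivative_works by blast
  have on: "onorm (frechet_derivative f (at x)) \<le> C" for x
  proof (rule onorm_le)
    fix h :: "real^'a"
    let ?L = "frechet_derivative f (at x)"
    have lin: "linear ?L" using der[of x] has_derivative_linear by blast
    have "?L h = ?L (\<Sum>i\<in>Basis. (h \<bullet> i) *\<^sub>R i)" by (simp add: euclidean_representation)
    also have "\<dots> = (\<Sum>i\<in>Basis. (h \<bullet> i) *\<^sub>R ?L i)" by (simp add: linear_sum[OF lin] linear_scale[OF lin])
    finally have eq: "?L h = (\<Sum>i\<in>Basis. (h \<bullet> i) * ?L i)" by simp
    have "\<bar>\<Sum>i\<in>Basis. (h \<bullet> i) * ?L i\<bar> \<le> (\<Sum>i\<in>Basis. \<bar>(h \<bullet> i) * ?L i\<bar>)" by (rule sum_abs)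
    also have "\<dots> \<le> (\<Sum>i\<in>(Basis::(real^'a) set). norm h * B)"
    proof (rule sum_mono)
      fix i :: "real^'a" assume i: "i \<in> Basis"
      have "\<bar>h \<bullet> i\<bar> \<le> norm h" using Basis_le_norm[OF i] by simp
      moreover have "\<bar>?L i\<bar> \<le> B" using B[OF i] .
      ultimately show "\<bar>(h \<bullet> i) * ?L i\<bar> \<le> norm h * B"
        by (simp add: abs_mult mult_mono)
    qed
    also have "\<dots> = C * norm h" by (simp add: C_def)
    finally show "norm (?L h) \<le> C * norm h" using eq by simp
  qed
  have "norm (f x - f y) \<le> C * norm (x - y)" for x y
    by (rule differentiable_bound[of UNIV f "\<lambda>x. frechet_derivative f (at x)"]) (use der on in auto)
  then show ?thesis by (auto simp: dist_norm)
qed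



definition Qk :: "real^'a \<Rightarrow> (real^'a) set" where "Qk k = box k (k + 1)"

lemma cubeQ_box: "cubeQ = box 0 (1::real^'a)"
  by (auto simp: cubeQ_def mem_box_cart)

lemma mem_Qk: "x \<in> Qk k \<longleftrightarrow> x - k \<in> cubeQ"
  by (auto simp: Qk_def cubeQ_def mem_box_cart diff_less_eq add.commute)

lemma Qk_borel[measurable]: "Qk k \<in> sets borel"
  unfolding Qk_def by simp

lemma cubeQ_borel[measurable]: "cubeQ \<in> sets borel"
  unfolding cubeQ_box by simp

lemma indicator_Qk_shift: "indicator (Qk k) (k + x) = (indicator cubeQ x :: real)"
  by (simp add: indicator_def mem_Qk)

lemma Ints_unique_interval:
  fixes a b x :: real
  assumes "a \<in> \<int>" "b \<in> \<int>" "x - 1 < a" "a < x" "x - 1 < b" "b < x"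
  shows "a = b"
proof -
  obtain m where m: "a = of_int m" using assms(1) by (auto elim: Ints_cases)
  obtain l where l: "b = of_int l" using assms(2) by (auto elim: Ints_cases)
  have "of_int m < (of_int l + 1 :: real)" "of_int l < (of_int m + 1 :: real)" using assms m l by linarith+
  then have "m < l + 1" "l < m + 1" by linarith+
  then have "m = l" by linarith
  then show ?thesis using m l by simp
qed

lemma grid_unique:
  fixes x :: "real^'a"
  assumes "\<forall>j. x $ j \<notin> \<int>"
  shows "\<exists>!k. k \<in> intvecs \<and> x \<in> Qk k"
proof
  let ?k = "(\<chi> j. of_int \<lfloor>x $ j\<rfloor>) :: real^'a"
  have lt: "of_int \<lfloor>x $ j\<rfloor> < x $ j" for j
  proof -
    have "of_int \<lfloor>x $ j\<rfloor> \<le> x $ j" by (rule of_int_floor_le)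
    moreover have "of_int \<lfloor>x $ j\<rfloor> \<noteq> x $ j" using assms by (metis Ints_of_int)
    ultimately show ?thesis by (rule order_le_neq_trans)
  qed
  have lt2: "x $ j - of_int \<lfloor>x $ j\<rfloor> < 1" for j by linarith
  show "?k \<in> intvecs \<and> x \<in> Qk ?k"
    using lt lt2 by (auto simp: intvecs_def mem_Qk cubeQ_def)
  fix k assume k: "k \<in> intvecs \<and> x \<in> Qk k"
  show "k = ?k"
  proof (rule vec_eq_iff[THEN iffD2, rule_format])
    fix j
    have "?k $ j \<in> \<int>" "k $ j \<in> \<int>" using k by (auto simp: intvecs_def)
    moreover have "k $ j < x $ j \<and> x $ j - k $ j < 1" using k by (auto simp: mem_Qk cubeQ_def)
    then have "x $ j - 1 < k $ j" "k $ j < x $ j" by linarith+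
    moreover have "x $ j - 1 < ?k $ j" "?k $ j < x $ j"
      using lt[of j] lt2[of j] by auto
    ultimately show "k $ j = ?k $ j" using Ints_unique_interval by blast
  qed
qed

lemma grid_null: "AE x in lborel. \<forall>j. (x::real^'a) $ j \<notin> \<int>"
proof -
  let ?G = "\<Union>((\<lambda>(j, m). {x::real^'a. x $ j = m}) ` (UNIV \<times> \<int>))"
  have "countable (\<int> :: real set)" unfolding Ints_def by simp
  then have "countable (UNIV \<times> (\<int> :: real set) :: ('a \<times> real) set)" by simp
  moreover have "negligible {x::real^'a. x $ j = m}" for j m
  proof -
    have "{x::real^'a. x $ j = m} = {x. x \<bullet> axis j 1 = m}" by (simp add: cart_eq_inner_axis)
    moreover have "axis j (1::real) \<in> (Basis :: (real^'a) set)" by (simp add: axis_in_Basis_iff)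
    ultimately show ?thesis using negligible_standard_hyperplane by metis
  qed
  ultimately have "negligible ?G" by (intro negligible_countable_Union) auto
  then have "?G \<in> null_sets lebesgue" by (simp add: negligible_iff_null_sets)
  then have "AE x in lebesgue. x \<notin> ?G" by (rule AE_not_in)
  then have "AE x in lborel. x \<notin> ?G" by (simp add: AE_completion_iff)
  then show ?thesis by eventually_elim auto
qed

lemma grid_unique_enum:
  fixes x :: "real^'a"
  assumes "\<forall>j. x $ j \<notin> \<int>"
  shows "\<exists>i0. \<forall>i. x \<in> Qk (enum_iv i) \<longleftrightarrow> i = i0"
proof -
  obtain k where k: "k \<in> intvecs" "x \<in> Qk k" and u: "\<And>k'. k' \<in> intvecs \<Longrightarrow> x \<in> Qk k' \<Longrightarrow> k' = k"
    using grid_unique[OF assms] by blast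
  obtain i0 where i0: "enum_iv i0 = k" using bij_enum_iv k(1) by (metis bij_betw_def imageE)
  have inj: "inj enum_iv" using bij_enum_iv by (auto simp: bij_betw_def)
  show ?thesis
  proof (intro exI allI iffI)
    fix i assume "x \<in> Qk (enum_iv i)"
    then have "enum_iv i = k" using u enum_iv_in by blast
    then show "i = i0" using i0 inj by (auto simp: inj_def)
  qed (use i0 k in auto)
qed

lemma partition_sums:
  fixes \<pi> :: "'b \<Rightarrow> real^'a" and h :: "'b \<Rightarrow> real"
  assumes pi[measurable]: "\<pi> \<in> M \<rightarrow>\<^sub>M borel"
    and ae: "AE w in M. \<forall>j. \<pi> w $ j \<notin> \<int>"
    and h: "integrable M h"
  shows "(\<lambda>i. \<integral>w. indicator (Qk (enum_iv i)) (\<pi> w) * h w \<partial>M) sums (\<integral>w. h w \<partial>M)"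
proof -
  define f where "f i w = indicator (Qk (enum_iv i)) (\<pi> w) * h w" for i w
  have hm[measurable]: "h \<in> borel_measurable M" using h by auto
  have fm[measurable]: "f i \<in> borel_measurable M" for i unfolding f_def by measurable
  have fi: "integrable M (f i)" for i
    by (rule Bochner_Integration.integrable_bound[OF h fm]) (auto simp: f_def indicator_def)
  have AEu: "AE w in M. \<exists>i0. \<forall>i. f i w = (if i = i0 then h w else 0)"
    using ae
  proof eventually_elim
    case (elim w)
    then obtain i0 where "\<forall>i. \<pi> w \<in> Qk (enum_iv i) \<longleftrightarrow> i = i0" using grid_unique_enum by blast
    then show ?case by (intro exI[of _ i0]) (auto simp: f_def)
  qed
  have s1: "AE w in M. summable (\<lambda>i. norm (f i w))"
    using AEu
  proof eventually_elim
    case (elim w)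
    then obtain i0 where "\<forall>i. f i w = (if i = i0 then h w else 0)" by blast
    then show ?case by (intro summable_finite[of "{i0}"]) auto
  qed
  have s2: "summable (\<lambda>i. \<integral>w. norm (f i w) \<partial>M)"
  proof (rule summableI_nonneg_bounded)
    fix n
    have "(\<Sum>i<n. \<integral>w. norm (f i w) \<partial>M) = (\<integral>w. (\<Sum>i<n. norm (f i w)) \<partial>M)"
      using Bochner_Integration.integral_sum[where I="{..<n}" and f="\<lambda>i w. norm (f i w)"] fi by simp
    also have "\<dots> \<le> (\<integral>w. norm (h w) \<partial>M)"
    proof (rule integral_mono_AE)
      show "integrable M (\<lambda>w. \<Sum>i<n. norm (f i w))" using fi by auto
      show "integrable M (\<lambda>w. norm (h w))" using h by auto
      show "AE w in M. (\<Sum>i<n. norm (f i w)) \<le> norm (h w)"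
        using AEu
      proof eventually_elim
        case (elim w)
        then obtain i0 where i0: "\<forall>i. f i w = (if i = i0 then h w else 0)" by blast
        have "(\<Sum>i<n. norm (f i w)) = (\<Sum>i<n. if i = i0 then norm (h w) else 0)"
          using i0 by (intro sum.cong) auto
        also have "\<dots> \<le> norm (h w)" by (simp add: sum.delta)
        finally show ?case .
      qed
    qed
    finally show "(\<Sum>i<n. \<integral>w. norm (f i w) \<partial>M) \<le> (\<integral>w. norm (h w) \<partial>M)" .
  qed (auto intro: integral_nonneg_AE)
  have "(\<lambda>i. integral\<^sup>L M (f i)) sums (\<integral>w. (\<Sum>i. f i w) \<partial>M)"
    by (rule sums_integral[OF fi s1 s2])
  moreover have "(\<integral>w. (\<Sum>i. f i w) \<partial>M) = (\<integral>w. h w \<partial>M)"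
  proof (rule integral_cong_AE)
    show "(\<lambda>w. \<Sum>i. f i w) \<in> borel_measurable M" by measurable
    show "AE w in M. (\<Sum>i. f i w) = h w"
      using AEu
    proof eventually_elim
      case (elim w)
      then obtain i0 where i0: "\<forall>i. f i w = (if i = i0 then h w else 0)" by blast
      have "(\<Sum>i. f i w) = (\<Sum>i\<in>{i0}. f i w)" by (rule suminf_finite) (use i0 in auto)
      then show ?case using i0 by simp
    qed
  qed simp
  ultimately show ?thesis unfolding f_def by simp
qed

lemma lborel_shift:
  fixes f :: "real^'a \<Rightarrow> real"
  assumes [measurable]: "f \<in> borel_measurable lborel"
  shows "integral\<^sup>L lborel f = (\<integral>x. f (c + x) \<partial>lborel)"
    and "integrable lborel f \<longleftrightarrow> integrable lborel (\<lambda>x. f (c + x))"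
proof -
  have e: "distr lborel borel ((+) c) = lborel" by (rule lborel_distr_plus)
  have m: "((+) c) \<in> lborel \<rightarrow>\<^sub>M borel" by simp
  have fb: "f \<in> borel_measurable borel" using assms by simp
  show "integral\<^sup>L lborel f = (\<integral>x. f (c + x) \<partial>lborel)"
    using integral_distr[OF m fb] e by simp
  show "integrable lborel f \<longleftrightarrow> integrable lborel (\<lambda>x. f (c + x))"
    using integrable_distr_eq[OF m fb] e by simp
qed

lemma M2_distr: "distr M2 (borel \<Otimes>\<^sub>M borel) (\<lambda>(x, y). (c + x, c + y)) = (M2 :: ((real^'a) \<times> (real^'a)) measure)"
proof -
  have m: "((+) c) \<in> lborel \<rightarrow>\<^sub>M (borel :: (real^'a) measure)" by simp
  have "distr lborel borel ((+) c) \<Otimes>\<^sub>M distr lborel borel ((+) c) =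
        distr (lborel \<Otimes>\<^sub>M lborel) (borel \<Otimes>\<^sub>M borel) (\<lambda>(x, y). ((+) c x, (+) c y))"
    by (rule pair_measure_distr[OF m m]) (simp add: lborel_distr_plus lborel.sigma_finite_measure_axioms)
  then show ?thesis by (simp add: lborel_distr_plus)
qed

lemma M2_shift:
  fixes f :: "(real^'a) \<times> (real^'a) \<Rightarrow> real"
  assumes fm: "f \<in> borel_measurable M2"
  shows "integral\<^sup>L M2 f = (\<integral>w. f (c + fst w, c + snd w) \<partial>M2)"
    and "integrable M2 f \<longleftrightarrow> integrable M2 (\<lambda>w. f (c + fst w, c + snd w))"
proof -
  have m: "(\<lambda>(x, y). (c + x, c + y)) \<in> M2 \<rightarrow>\<^sub>M (borel \<Otimes>\<^sub>M borel :: ((real^'a) \<times> (real^'a)) measure)"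
    by measurable
  have sets: "sets (borel \<Otimes>\<^sub>M borel) = sets (M2 :: ((real^'a) \<times> (real^'a)) measure)"
    by (intro sets_pair_measure_cong) simp_all
  have fb: "f \<in> borel_measurable (borel \<Otimes>\<^sub>M borel)"
    using fm measurable_cong_sets[OF sets refl] by blast
  have sp: "(\<lambda>w. f ((\<lambda>(x, y). (c + x, c + y)) w)) = (\<lambda>w. f (c + fst w, c + snd w))"
    by (auto simp: case_prod_beta)
  show "integral\<^sup>L M2 f = (\<integral>w. f (c + fst w, c + snd w) \<partial>M2)"
    using integral_distr[OF m fb] M2_distr[of c] sp by simp
  show "integrable M2 f \<longleftrightarrow> integrable M2 (\<lambda>w. f (c + fst w, c + snd w))"
    using integrable_distr_eq[OF m fb] M2_distr[of c] sp by simp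
qed

lemma AE_M2_fst:
  assumes "AE x in lborel. P x"
  shows "AE w in (M2 :: ((real^'a) \<times> (real^'a)) measure). P (fst w)"
proof -
  obtain N where N: "N \<in> null_sets lborel" "{x. \<not> P x} \<subseteq> N"
    using assms by (auto simp: eventually_ae_filter)
  have Nb: "N \<in> sets lborel" "emeasure lborel N = 0" using N(1) by auto
  have "emeasure (M2 :: ((real^'a) \<times> (real^'a)) measure) (N \<times> UNIV) = emeasure lborel N * emeasure lborel (UNIV :: (real^'a) set)"
    by (rule lborel.emeasure_pair_measure_Times) (use Nb in auto)
  moreover have "N \<times> UNIV \<in> sets (M2 :: ((real^'a) \<times> (real^'a)) measure)" using Nb by auto
  ultimately have "N \<times> UNIV \<in> null_sets (M2 :: ((real^'a) \<times> (real^'a)) measure)"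
    using Nb by (simp add: null_sets_def)
  moreover have "{w \<in> space M2. \<not> P (fst w)} \<subseteq> N \<times> UNIV" using N(2) by auto
  ultimately show ?thesis by (auto simp: eventually_ae_filter)
qed



lemma nn_shift:
  fixes f :: "real^'a \<Rightarrow> ennreal"
  assumes [measurable]: "f \<in> borel_measurable borel"
  shows "(\<integral>\<^sup>+y. f (c + y) \<partial>lborel) = (\<integral>\<^sup>+y. f y \<partial>lborel)"
proof -
  have m: "((+) c) \<in> lborel \<rightarrow>\<^sub>M (borel :: (real^'a) measure)" by simp
  have "(\<integral>\<^sup>+y. f y \<partial>distr lborel borel ((+) c)) = (\<integral>\<^sup>+y. f (c + y) \<partial>lborel)"
    by (rule nn_integral_distr[OF m]) simp
  then show ?thesis by (simp add: lborel_distr_plus)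
qed

lemma ennreal_help:
  fixes a b c :: real
  assumes "0 \<le> c" "0 \<le> a" "0 \<le> b"
  shows "ennreal (c * (a + b)) = ennreal c * (ennreal a + ennreal b)"
  using assms by (metis ennreal_mult ennreal_plus add_nonneg_nonneg)

lemma F_integrable:
  fixes K :: "real^'n \<Rightarrow> real^'n \<Rightarrow> real" and z :: "(real^'n) \<times> (real^'n) \<Rightarrow> real"
    and \<eta> :: "real^'n \<Rightarrow> real"
  assumes K_meas: "(\<lambda>w. K (fst w) (snd w)) \<in> borel_measurable M2"
    and K_nonneg: "\<And>x y. K x y \<ge> 0"
    and K1_sym: "\<And>x y. K y x = K x y"
    and K1_trans: "\<And>x y w. K (x + w) (y + w) = K x y"
    and K2: "(\<integral>\<^sup>+ h. ennreal (norm h * K h 0) \<partial>lborel) < \<infinity>"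
    and z_meas: "z \<in> borel_measurable M2"
    and z_range: "\<And>w. z w \<in> {-1..1}"
    and sm: "smooth_fun \<eta>" and cpt: "compact (closure {x. \<eta> x \<noteq> 0})"
  shows "integrable M2 (\<lambda>w. 1/2 * z w * (\<eta> (fst w) - \<eta> (snd w)) * K (fst w) (snd w))"
proof -
  let ?S = "closure {x. \<eta> x \<noteq> 0}"
  define Kp where "Kp w = K (fst w) (snd w)" for w
  have Kp[measurable]: "Kp \<in> borel_measurable M2" using K_meas unfolding Kp_def .
  have zm[measurable]: "z \<in> borel_measurable M2" by (rule z_meas)
  have Sb[measurable]: "?S \<in> sets borel" by simp
  have cont: "continuous_on UNIV \<eta>"
    using smooth_differentiable[OF sm] differentiable_imp_continuous_within continuous_at_imp_continuous_on by blast
  have em[measurable]: "\<eta> \<in> borel_measurable borel" using cont by (rule borel_measurable_continuous_onI)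
  obtain C0 where C0: "\<And>x y. \<bar>\<eta> x - \<eta> y\<bar> \<le> C0 * dist x y" using smooth_lipschitz[OF sm cpt] by blast
  define C where "C = max C0 0"
  have C: "\<bar>\<eta> x - \<eta> y\<bar> \<le> C * dist x y" "C \<ge> 0" for x y
  proof -
    have "C0 * dist x y \<le> C * dist x y" unfolding C_def by (rule mult_right_mono) auto
    then show "\<bar>\<eta> x - \<eta> y\<bar> \<le> C * dist x y" using C0[of x y] by linarith
    show "C \<ge> 0" unfolding C_def by simp
  qed
  define G where "G w = norm (fst w - snd w) * Kp w" for w
  have Gm[measurable]: "G \<in> borel_measurable M2" unfolding G_def by measurable
  have G0: "G w \<ge> 0" for w unfolding G_def Kp_def using K_nonneg by simp
  have Gsym: "G (y, x) = G (x, y)" for x y unfolding G_def Kp_def using K1_sym[of x y]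
    by (simp add: norm_minus_commute)
  define I where "I = (\<integral>\<^sup>+ h. ennreal (norm h * K h 0) \<partial>lborel)"
  have inner: "(\<integral>\<^sup>+y. ennreal (G (x, y)) \<partial>lborel) = I" for x
  proof -
    have Kh: "(\<lambda>h. ennreal (norm h * K h 0)) \<in> borel_measurable borel"
    proof -
      have "(\<lambda>h. (h, 0::real^'n)) \<in> lborel \<rightarrow>\<^sub>M (M2 :: ((real^'n) \<times> (real^'n)) measure)" by measurable
      then have "(\<lambda>h. Kp (h, 0)) \<in> borel_measurable lborel" using Kp by (rule measurable_compose)
      then have [measurable]: "(\<lambda>h. K h 0) \<in> borel_measurable borel" unfolding Kp_def by simp
      show ?thesis by measurable
    qed
    have "G (x, y) = norm (-x + y) * K (-x + y) 0" for y
    proof -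
      have e1: "-x + y = y + -x" by (simp add: add.commute)
      have e2: "x + -x = 0" by simp
      have "K (y + -x) (x + -x) = K y x" by (rule K1_trans)
      then have "K (-x + y) 0 = K x y" unfolding e1 e2 using K1_sym[of x y] by simp
      moreover have "norm (-x + y) = norm (x - y)" by (simp add: norm_minus_commute)
      ultimately show ?thesis unfolding G_def Kp_def by simp
    qed
    then have "(\<integral>\<^sup>+y. ennreal (G (x, y)) \<partial>lborel) = (\<integral>\<^sup>+y. ennreal (norm (-x + y) * K (-x + y) 0) \<partial>lborel)"
      by simp
    also have "\<dots> = I" unfolding I_def by (rule nn_shift[OF Kh])
    finally show ?thesis .
  qed
  have I1: "(\<integral>\<^sup>+w. ennreal (indicator ?S (fst w) * G w) \<partial>M2) < \<infinity>"
  proof -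
    define f where "f w = ennreal (indicator ?S (fst w) * G w)" for w
    have fm: "f \<in> borel_measurable M2" unfolding f_def by measurable
    have "(\<integral>\<^sup>+w. ennreal (indicator ?S (fst w) * G w) \<partial>M2) =
          (\<integral>\<^sup>+x. \<integral>\<^sup>+y. ennreal (indicator ?S x * G (x, y)) \<partial>lborel \<partial>lborel)"
      using lborel.nn_integral_fst[OF fm] unfolding f_def by simp
    also have "\<dots> = (\<integral>\<^sup>+x. I * indicator ?S x \<partial>lborel)"
    proof (rule nn_integral_cong)
      fix x
      show "(\<integral>\<^sup>+y. ennreal (indicator ?S x * G (x, y)) \<partial>lborel) = I * indicator ?S x"
        using inner[of x] by (cases "x \<in> ?S") auto
    qed
    also have "\<dots> = I * emeasure lborel ?S" by (rule nn_integral_cmult_indicator) simp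
    also have "\<dots> < \<infinity>"
      using K2 emeasure_compact_finite[OF cpt] unfolding I_def by (simp add: ennreal_mult_less_top)
    finally show ?thesis .
  qed
  have I2: "(\<integral>\<^sup>+w. ennreal (indicator ?S (snd w) * G w) \<partial>M2) < \<infinity>"
  proof -
    have sw: "(\<lambda>(x, y). (y, x)) \<in> M2 \<rightarrow>\<^sub>M (M2 :: ((real^'n) \<times> (real^'n)) measure)" by measurable
    have "(\<integral>\<^sup>+w. ennreal (indicator ?S (snd w) * G w) \<partial>M2) =
          (\<integral>\<^sup>+w. ennreal (indicator ?S (snd w) * G w) \<partial>distr M2 M2 (\<lambda>(x, y). (y, x)))"
      by (simp add: lborel_pair.distr_pair_swap[symmetric])
    also have "\<dots> = (\<integral>\<^sup>+w. ennreal (indicator ?S (snd ((\<lambda>(x, y). (y, x)) w)) * G ((\<lambda>(x, y). (y, x)) w)) \<partial>M2)"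
      by (rule nn_integral_distr[OF sw]) measurable
    also have "\<dots> = (\<integral>\<^sup>+w. ennreal (indicator ?S (fst w) * G w) \<partial>M2)"
      by (rule nn_integral_cong) (auto simp: case_prod_beta Gsym)
    finally show ?thesis using I1 by simp
  qed
  let ?F = "\<lambda>w. 1/2 * z w * (\<eta> (fst w) - \<eta> (snd w)) * K (fst w) (snd w)"
  have Fm: "?F \<in> borel_measurable M2"
  proof -
    have "(\<lambda>w. 1/2 * z w * (\<eta> (fst w) - \<eta> (snd w)) * Kp w) \<in> borel_measurable M2" by measurable
    then show ?thesis unfolding Kp_def .
  qed
  have bound: "norm (?F w) \<le> C / 2 * (indicator ?S (fst w) * G w + indicator ?S (snd w) * G w)" for w
  proof (cases "fst w \<in> ?S \<or> snd w \<in> ?S")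
    case True
    have "norm (?F w) = 1/2 * \<bar>z w\<bar> * \<bar>\<eta> (fst w) - \<eta> (snd w)\<bar> * K (fst w) (snd w)"
      using K_nonneg by (simp add: abs_mult)
    also have "\<dots> \<le> 1/2 * 1 * (C * dist (fst w) (snd w)) * K (fst w) (snd w)"
      using z_range[of w] C(1)[of "fst w" "snd w"] K_nonneg
      by (intro mult_right_mono mult_mono) auto
    also have "\<dots> = C / 2 * G w" by (simp add: G_def Kp_def dist_norm)
    also have "\<dots> \<le> C / 2 * (indicator ?S (fst w) * G w + indicator ?S (snd w) * G w)"
      using True G0[of w] C(2) by (intro mult_left_mono) (auto simp: indicator_def)
    finally show ?thesis .
  next
    case False
    then have "\<eta> (fst w) = 0" "\<eta> (snd w) = 0"
      using closure_subset[of "{x. \<eta> x \<noteq> 0}"] by auto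
    then show ?thesis using G0[of w] C(2) by (simp add: indicator_def)
  qed
  have "(\<integral>\<^sup>+w. ennreal (norm (?F w)) \<partial>M2) \<le>
        (\<integral>\<^sup>+w. ennreal (C / 2) * (ennreal (indicator ?S (fst w) * G w) + ennreal (indicator ?S (snd w) * G w)) \<partial>M2)"
  proof (rule nn_integral_mono)
    fix w
    have "ennreal (norm (?F w)) \<le> ennreal (C / 2 * (indicator ?S (fst w) * G w + indicator ?S (snd w) * G w))"
      using bound[of w] by (rule ennreal_leI)
    also have "\<dots> = ennreal (C / 2) * (ennreal (indicator ?S (fst w) * G w) + ennreal (indicator ?S (snd w) * G w))"
      using G0[of w] C(2) by (intro ennreal_help) auto
    finally show "ennreal (norm (?F w)) \<le> ennreal (C / 2) * (ennreal (indicator ?S (fst w) * G w) + ennreal (indicator ?S (snd w) * G w))" .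
  qed
  also have "\<dots> = ennreal (C / 2) * ((\<integral>\<^sup>+w. ennreal (indicator ?S (fst w) * G w) \<partial>M2) + (\<integral>\<^sup>+w. ennreal (indicator ?S (snd w) * G w) \<partial>M2))"
  proof -
    define a where "a w = ennreal (indicator ?S (fst w) * G w)" for w
    define b where "b w = ennreal (indicator ?S (snd w) * G w)" for w
    have am: "a \<in> borel_measurable M2" unfolding a_def by measurable
    have bm: "b \<in> borel_measurable M2" unfolding b_def by measurable
    have abm: "(\<lambda>w. a w + b w) \<in> borel_measurable M2" using am bm by measurable
    have "(\<integral>\<^sup>+w. ennreal (C / 2) * (a w + b w) \<partial>M2) = ennreal (C / 2) * (\<integral>\<^sup>+w. (a w + b w) \<partial>M2)"
      by (rule nn_integral_cmult[OF abm])
    also have "(\<integral>\<^sup>+w. (a w + b w) \<partial>M2) = (\<integral>\<^sup>+w. a w \<partial>M2) + (\<integral>\<^sup>+w. b w \<partial>M2)"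
      by (rule nn_integral_add[OF am bm])
    finally show ?thesis unfolding a_def b_def .
  qed
  also have "\<dots> < \<infinity>" using I1 I2 by (simp add: ennreal_mult_less_top)
  finally show ?thesis by (intro integrableI_bounded Fm)
qed



lemma swap_eq:
  fixes f :: "nat \<Rightarrow> 'b \<Rightarrow> real" and H :: "'b \<Rightarrow> real"
  assumes fi: "\<And>i. integrable M (f i)"
    and s1: "AE w in M. summable (\<lambda>i. norm (f i w))"
    and s2: "summable (\<lambda>i. \<integral>w. norm (f i w) \<partial>M)"
    and sh: "(\<lambda>i. integral\<^sup>L M (f i)) sums c"
    and Hm: "H \<in> borel_measurable M"
    and sH: "AE w in M. (\<lambda>i. f i w) sums H w"
  shows "c = integral\<^sup>L M H"
proof -
  have "(\<lambda>i. integral\<^sup>L M (f i)) sums (\<integral>w. (\<Sum>i. f i w) \<partial>M)"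
    by (rule sums_integral[OF fi s1 s2])
  then have "c = (\<integral>w. (\<Sum>i. f i w) \<partial>M)" using sh sums_unique2 by blast
  also have "\<dots> = integral\<^sup>L M H"
  proof (rule integral_cong_AE)
    show "(\<lambda>w. \<Sum>i. f i w) \<in> borel_measurable M" using fi by measurable
    show "AE w in M. (\<Sum>i. f i w) = H w" using sH by eventually_elim (simp add: sums_iff)
  qed (rule Hm)
  finally show ?thesis .
qed

lemma abs_supp: "{x. \<bar>f x\<bar> \<noteq> (0::real)} = {x. f x \<noteq> 0}" by auto

lemma E2:
  fixes g \<eta> :: "real^'n \<Rightarrow> real"
  assumes g_meas: "g \<in> borel_measurable lborel"
    and g_bdd: "\<exists>B. AE x in lborel. \<bar>g x\<bar> \<le> B"
    and g_per: "periodic_ae g"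
    and sm: "smooth_fun \<eta>" and cpt: "compact (closure {x. \<eta> x \<noteq> 0})"
  shows "(LINT x|lborel. g x * \<eta> x) = (LINT x:cubeQ|lborel. g x * per \<eta> x)"
proof -
  let ?S = "closure {x. \<eta> x \<noteq> 0}"
  have gm[measurable]: "g \<in> borel_measurable borel" using g_meas by simp
  have cont: "continuous_on UNIV \<eta>"
    using smooth_differentiable[OF sm] differentiable_imp_continuous_within continuous_at_imp_continuous_on by blast
  have em[measurable]: "\<eta> \<in> borel_measurable borel" using cont by (rule borel_measurable_continuous_onI)
  have bdd: "bounded {x. \<eta> x \<noteq> 0}" using cpt compact_imp_bounded bounded_subset closure_subset by metis
  have bdd': "bounded {x. \<bar>\<eta> x\<bar> \<noteq> 0}" using bdd by (simp only: abs_supp)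
  obtain B where B: "AE x in lborel. \<bar>g x\<bar> \<le> B" using g_bdd by blast
  have "integrable lborel (\<lambda>x. indicator ?S x *\<^sub>R \<eta> x)"
    by (rule borel_integrable_compact[OF cpt]) (use cont continuous_on_subset in blast)
  moreover have "(\<lambda>x. indicator ?S x *\<^sub>R \<eta> x) = \<eta>"
  proof
    fix x show "indicator ?S x *\<^sub>R \<eta> x = \<eta> x"
      using closure_subset[of "{x. \<eta> x \<noteq> 0}"] by (cases "x \<in> ?S") auto
  qed
  ultimately have ei: "integrable lborel \<eta>" by simp
  have Fi: "integrable lborel (\<lambda>x. g x * \<eta> x)"
  proof (rule Bochner_Integration.integrable_bound)
    show "integrable lborel (\<lambda>x. B * \<eta> x)" using ei by simp
    show "(\<lambda>x. g x * \<eta> x) \<in> borel_measurable lborel" by measurable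
    show "AE x in lborel. norm (g x * \<eta> x) \<le> norm (B * \<eta> x)"
      using B by eventually_elim (auto simp: abs_mult intro: mult_right_mono order_trans[OF _ abs_ge_self])
  qed
  have T: "integrable lborel (\<lambda>x. indicator cubeQ x * \<psi> (g x * \<eta> (x + k))) \<and>
           (\<integral>x. indicator (Qk k) x * \<psi> (g x * \<eta> x) \<partial>lborel) = (\<integral>x. indicator cubeQ x * \<psi> (g x * \<eta> (x + k)) \<partial>lborel)"
    if k: "k \<in> intvecs" and psi[measurable]: "\<psi> \<in> borel_measurable borel" and psib: "\<And>t. \<bar>\<psi> t\<bar> \<le> \<bar>t\<bar>" for k \<psi>
  proof -
    let ?A = "\<lambda>x. indicator (Qk k) x * \<psi> (g x * \<eta> x)"
    have Am: "?A \<in> borel_measurable lborel" by measurable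
    have Ai: "integrable lborel ?A"
    proof (rule Bochner_Integration.integrable_bound[OF Fi Am], rule AE_I2)
      fix x
      have "\<bar>?A x\<bar> \<le> \<bar>\<psi> (g x * \<eta> x)\<bar>" by (simp add: indicator_def)
      also have "\<dots> \<le> \<bar>g x * \<eta> x\<bar>" by (rule psib)
      finally show "norm (?A x) \<le> norm (g x * \<eta> x)" by simp
    qed
    have ae: "AE x in lborel. ?A (k + x) = indicator cubeQ x * \<psi> (g x * \<eta> (x + k))"
    proof -
      have "AE x in lborel. g (x + k) = g x" using g_per k unfolding periodic_ae_def by blast
      then show ?thesis
      proof eventually_elim
        case (elim x)
        have "indicator (Qk k) (k + x) = (indicator cubeQ x :: real)" by (rule indicator_Qk_shift)
        then show ?case using elim by (simp add: add.commute)
      qed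
    qed
    have Ami: "(\<lambda>x. indicator cubeQ x * \<psi> (g x * \<eta> (x + k))) \<in> borel_measurable lborel" by measurable
    have shm: "(\<lambda>x. ?A (k + x)) \<in> borel_measurable lborel" by measurable
    have "integrable lborel (\<lambda>x. ?A (k + x))" using Ai lborel_shift(2)[OF Am, of k] by simp
    then have i2: "integrable lborel (\<lambda>x. indicator cubeQ x * \<psi> (g x * \<eta> (x + k)))"
      using integrable_cong_AE[OF shm Ami ae] by simp
    have "(\<integral>x. ?A x \<partial>lborel) = (\<integral>x. ?A (k + x) \<partial>lborel)" by (rule lborel_shift(1)[OF Am])
    also have "\<dots> = (\<integral>x. indicator cubeQ x * \<psi> (g x * \<eta> (x + k)) \<partial>lborel)"
      by (rule integral_cong_AE[OF shm Ami ae])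
    finally show ?thesis using i2 by simp
  qed
  define f where "f i x = indicator cubeQ x * (g x * \<eta> (x + enum_iv i))" for i x
  have Tid: "integrable lborel (f i) \<and> (\<integral>x. indicator (Qk (enum_iv i)) x * (g x * \<eta> x) \<partial>lborel) = integral\<^sup>L lborel (f i)" for i
    using T[OF enum_iv_in, of "\<lambda>t. t" i] unfolding f_def by simp
  have Tabs: "(\<integral>x. indicator (Qk (enum_iv i)) x * \<bar>g x * \<eta> x\<bar> \<partial>lborel) = (\<integral>x. norm (f i x) \<partial>lborel)" for i
    using T[OF enum_iv_in, of "abs" i] unfolding f_def by (simp add: abs_mult)
  have P: "(\<lambda>i. \<integral>x. indicator (Qk (enum_iv i)) x * (g x * \<eta> x) \<partial>lborel) sums (\<integral>x. g x * \<eta> x \<partial>lborel)"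
    by (rule partition_sums[where \<pi>="\<lambda>x. x"]) (use grid_null Fi in auto)
  have P': "(\<lambda>i. \<integral>x. indicator (Qk (enum_iv i)) x * \<bar>g x * \<eta> x\<bar> \<partial>lborel) sums (\<integral>x. \<bar>g x * \<eta> x\<bar> \<partial>lborel)"
    by (rule partition_sums[where \<pi>="\<lambda>x. x"]) (use grid_null Fi in auto)
  have sx: "(\<lambda>i. f i x) sums (indicator cubeQ x * (g x * per \<eta> x))" for x
    unfolding f_def by (intro sums_mult per_sums bdd)
  have sxn: "summable (\<lambda>i. norm (f i x))" for x
  proof (rule summable_comparison_test')
    show "summable (\<lambda>i. \<bar>indicator cubeQ x * g x\<bar> * \<bar>\<eta> (x + enum_iv i)\<bar>)"
      by (rule sums_summable[OF sums_mult[OF per_sums[OF bdd', of x], of "\<bar>indicator cubeQ x * g x\<bar>"]])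
    show "norm (norm (f i x)) \<le> \<bar>indicator cubeQ x * g x\<bar> * \<bar>\<eta> (x + enum_iv i)\<bar>" for i
      unfolding f_def by (simp add: abs_mult)
  qed
  have "(\<integral>x. g x * \<eta> x \<partial>lborel) = (\<integral>x. indicator cubeQ x * (g x * per \<eta> x) \<partial>lborel)"
  proof (rule swap_eq)
    show "integrable lborel (f i)" for i using Tid by blast
    show "AE w in lborel. summable (\<lambda>i. norm (f i w))" using sxn by simp
    show "summable (\<lambda>i. \<integral>w. norm (f i w) \<partial>lborel)" using P' Tabs sums_summable by simp
    show "(\<lambda>i. integral\<^sup>L lborel (f i)) sums (\<integral>x. g x * \<eta> x \<partial>lborel)" using P Tid by simp
    show "(\<lambda>x. indicator cubeQ x * (g x * per \<eta> x)) \<in> borel_measurable lborel"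
    proof -
      have "per \<eta> \<in> borel_measurable borel"
        using per_has_derivative[OF sm cpt] has_derivative_continuous continuous_at_imp_continuous_on
        by (metis borel_measurable_continuous_onI)
      then show ?thesis by measurable
    qed
    show "AE w in lborel. (\<lambda>i. f i w) sums (indicator cubeQ w * (g w * per \<eta> w))" using sx by simp
  qed
  then show ?thesis by (simp add: set_lebesgue_integral_def)
qed



lemma E1:
  fixes K :: "real^'n \<Rightarrow> real^'n \<Rightarrow> real" and z :: "(real^'n) \<times> (real^'n) \<Rightarrow> real"
    and \<eta> :: "real^'n \<Rightarrow> real"
  assumes K_meas: "(\<lambda>w. K (fst w) (snd w)) \<in> borel_measurable M2"
    and K_nonneg: "\<And>x y. K x y \<ge> 0"
    and K1_sym: "\<And>x y. K y x = K x y"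
    and K1_trans: "\<And>x y w. K (x + w) (y + w) = K x y"
    and K2: "(\<integral>\<^sup>+ h. ennreal (norm h * K h 0) \<partial>lborel) < \<infinity>"
    and z_meas: "z \<in> borel_measurable M2"
    and z_range: "\<And>w. z w \<in> {-1..1}"
    and z_d: "\<And>k. k \<in> intvecs \<Longrightarrow> AE w in M2. z (fst w + k, snd w + k) = z w"
    and sm: "smooth_fun \<eta>" and cpt: "compact (closure {x. \<eta> x \<noteq> 0})"
  shows "(LINT w|M2. 1/2 * z w * (\<eta> (fst w) - \<eta> (snd w)) * K (fst w) (snd w)) =
         (LINT w:(cubeQ \<times> UNIV)|M2. 1/2 * z w * (per \<eta> (fst w) - per \<eta> (snd w)) * K (fst w) (snd w))"
proof -
  define Kp where "Kp w = K (fst w) (snd w)" for w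
  have Kp[measurable]: "Kp \<in> borel_measurable M2" using K_meas unfolding Kp_def .
  have zm[measurable]: "z \<in> borel_measurable M2" by (rule z_meas)
  have cont: "continuous_on UNIV \<eta>"
    using smooth_differentiable[OF sm] differentiable_imp_continuous_within continuous_at_imp_continuous_on by blast
  have em[measurable]: "\<eta> \<in> borel_measurable borel" using cont by (rule borel_measurable_continuous_onI)
  have bdd: "bounded {x. \<eta> x \<noteq> 0}" using cpt compact_imp_bounded bounded_subset closure_subset by metis
  have bdd': "bounded {x. \<bar>\<eta> x\<bar> \<noteq> 0}" using bdd by (simp only: abs_supp)
  define F where "F w = 1/2 * z w * (\<eta> (fst w) - \<eta> (snd w)) * Kp w" for w
  have Fm[measurable]: "F \<in> borel_measurable M2" unfolding F_def by measurable
  have Fi: "integrable M2 F"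
    using F_integrable[OF K_meas K_nonneg K1_sym K1_trans K2 z_meas z_range sm cpt] unfolding F_def Kp_def .
  define Fk where "Fk k w = 1/2 * z w * (\<eta> (fst w + k) - \<eta> (snd w + k)) * Kp w" for k w
  have T: "integrable M2 (\<lambda>w. indicator cubeQ (fst w) * \<psi> (Fk k w)) \<and>
           (\<integral>w. indicator (Qk k) (fst w) * \<psi> (F w) \<partial>M2) = (\<integral>w. indicator cubeQ (fst w) * \<psi> (Fk k w) \<partial>M2)"
    if k: "k \<in> intvecs" and psi[measurable]: "\<psi> \<in> borel_measurable borel" and psib: "\<And>t. \<bar>\<psi> t\<bar> \<le> \<bar>t\<bar>" for k \<psi>
  proof -
    let ?A = "\<lambda>w. indicator (Qk k) (fst w) * \<psi> (F w)"
    let ?B = "\<lambda>w. indicator cubeQ (fst w) * \<psi> (Fk k w)"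
    have Am: "?A \<in> borel_measurable M2" by measurable
    have Bm: "?B \<in> borel_measurable M2" unfolding Fk_def by measurable
    have Ai: "integrable M2 ?A"
    proof (rule Bochner_Integration.integrable_bound[OF Fi Am], rule AE_I2)
      fix x
      have "\<bar>?A x\<bar> \<le> \<bar>\<psi> (F x)\<bar>" by (simp add: indicator_def)
      also have "\<dots> \<le> \<bar>F x\<bar>" by (rule psib)
      finally show "norm (?A x) \<le> norm (F x)" by simp
    qed
    have shm: "(\<lambda>w. ?A (k + fst w, k + snd w)) \<in> borel_measurable M2" by measurable
    have ae: "AE w in M2. ?A (k + fst w, k + snd w) = ?B w"
    proof -
      have "AE w in M2. z (fst w + k, snd w + k) = z w" using z_d k by blast
      then show ?thesis
      proof eventually_elim
        case (elim w)
        have "indicator (Qk k) (k + fst w) = (indicator cubeQ (fst w) :: real)" by (rule indicator_Qk_shift)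
        moreover have "Kp (k + fst w, k + snd w) = Kp w"
          unfolding Kp_def using K1_trans[where x="fst w" and y="snd w" and w=k] by (simp add: add.commute)
        moreover have "z (k + fst w, k + snd w) = z w" using elim by (simp add: add.commute)
        ultimately show ?case unfolding F_def Fk_def by (simp add: add.commute)
      qed
    qed
    have "integrable M2 (\<lambda>w. ?A (k + fst w, k + snd w))" using Ai M2_shift(2)[OF Am, of k] by simp
    then have i2: "integrable M2 ?B" using integrable_cong_AE[OF shm Bm ae] by simp
    have "(\<integral>w. ?A w \<partial>M2) = (\<integral>w. ?A (k + fst w, k + snd w) \<partial>M2)"
      using M2_shift(1)[OF Am, of k] by simp
    also have "\<dots> = (\<integral>w. ?B w \<partial>M2)" by (rule integral_cong_AE[OF shm Bm ae])
    finally show ?thesis using i2 by simp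
  qed
  define f where "f i w = indicator cubeQ (fst w) * Fk (enum_iv i) w" for i w
  have Tid: "integrable M2 (f i) \<and> (\<integral>w. indicator (Qk (enum_iv i)) (fst w) * F w \<partial>M2) = integral\<^sup>L M2 (f i)" for i
    using T[OF enum_iv_in, of "\<lambda>t. t" i] unfolding f_def by simp
  have Tabs: "(\<integral>w. indicator (Qk (enum_iv i)) (fst w) * \<bar>F w\<bar> \<partial>M2) = (\<integral>w. norm (f i w) \<partial>M2)" for i
    using T[OF enum_iv_in, of "abs" i] unfolding f_def by (simp add: abs_mult)
  have gn: "AE w in M2. \<forall>j. fst w $ j \<notin> \<int>" by (rule AE_M2_fst[OF grid_null])
  have P: "(\<lambda>i. \<integral>w. indicator (Qk (enum_iv i)) (fst w) * F w \<partial>M2) sums (\<integral>w. F w \<partial>M2)"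
    by (rule partition_sums[where \<pi>="fst"]) (use gn Fi in auto)
  have P': "(\<lambda>i. \<integral>w. indicator (Qk (enum_iv i)) (fst w) * \<bar>F w\<bar> \<partial>M2) sums (\<integral>w. \<bar>F w\<bar> \<partial>M2)"
    by (rule partition_sums[where \<pi>="fst"]) (use gn Fi in auto)
  define H where "H w = indicator cubeQ (fst w) * (1/2 * z w * (per \<eta> (fst w) - per \<eta> (snd w)) * Kp w)" for w
  have sx: "(\<lambda>i. f i w) sums H w" for w
  proof -
    have "(\<lambda>i. (indicator cubeQ (fst w) * (1/2 * z w)) * (\<eta> (fst w + enum_iv i) - \<eta> (snd w + enum_iv i)) * Kp w)
          sums ((indicator cubeQ (fst w) * (1/2 * z w)) * (per \<eta> (fst w) - per \<eta> (snd w)) * Kp w)"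
      by (intro sums_mult2 sums_mult sums_diff per_sums bdd)
    then show ?thesis unfolding f_def Fk_def H_def by (simp add: ac_simps)
  qed
  have sxn: "summable (\<lambda>i. norm (f i w))" for w
  proof (rule summable_comparison_test')
    let ?c = "\<bar>indicator cubeQ (fst w) * (1/2 * z w) * Kp w\<bar>"
    have "(\<lambda>i. ?c * (\<bar>\<eta> (fst w + enum_iv i)\<bar> + \<bar>\<eta> (snd w + enum_iv i)\<bar>)) sums
          (?c * (per (\<lambda>x. \<bar>\<eta> x\<bar>) (fst w) + per (\<lambda>x. \<bar>\<eta> x\<bar>) (snd w)))"
      by (intro sums_mult sums_add per_sums[OF bdd'])
    then show "summable (\<lambda>i. ?c * (\<bar>\<eta> (fst w + enum_iv i)\<bar> + \<bar>\<eta> (snd w + enum_iv i)\<bar>))"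
      by (rule sums_summable)
    show "norm (norm (f i w)) \<le> ?c * (\<bar>\<eta> (fst w + enum_iv i)\<bar> + \<bar>\<eta> (snd w + enum_iv i)\<bar>)" for i
    proof -
      have "norm (norm (f i w)) = ?c * \<bar>\<eta> (fst w + enum_iv i) - \<eta> (snd w + enum_iv i)\<bar>"
        unfolding f_def Fk_def by (simp add: abs_mult ac_simps)
      also have "\<dots> \<le> ?c * (\<bar>\<eta> (fst w + enum_iv i)\<bar> + \<bar>\<eta> (snd w + enum_iv i)\<bar>)"
        by (intro mult_left_mono abs_triangle_ineq4) simp
      finally show ?thesis .
    qed
  qed
  have "(\<integral>w. F w \<partial>M2) = (\<integral>w. H w \<partial>M2)"
  proof (rule swap_eq)
    show "integrable M2 (f i)" for i using Tid by blast
    show "AE w in M2. summable (\<lambda>i. norm (f i w))" using sxn by simp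
    show "summable (\<lambda>i. \<integral>w. norm (f i w) \<partial>M2)" using P' Tabs sums_summable by simp
    show "(\<lambda>i. integral\<^sup>L M2 (f i)) sums (\<integral>w. F w \<partial>M2)" using P Tid by simp
    show "H \<in> borel_measurable M2"
    proof -
      have [measurable]: "per \<eta> \<in> borel_measurable borel"
        using per_has_derivative[OF sm cpt] has_derivative_continuous continuous_at_imp_continuous_on
        by (metis borel_measurable_continuous_onI)
      show ?thesis unfolding H_def by measurable
    qed
    show "AE w in M2. (\<lambda>i. f i w) sums H w" using sx by simp
  qed
  then show ?thesis unfolding F_def H_def Kp_def
    by (simp add: set_lebesgue_integral_def indicator_times)
qed


theorem mainTheorem3:
  fixes K :: "real^'n \<Rightarrow> real^'n \<Rightarrow> real"
    and g :: "real^'n \<Rightarrow> real"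
    and s1 s2 \<delta> \<kappa>1 \<kappa>2 \<kappa>3 :: real
    and p :: "real^'n"
    and u :: "real^'n \<Rightarrow> real"
    and z :: "(real^'n) \<times> (real^'n) \<Rightarrow> real"
  assumes dim: "CARD('n) \<ge> 2"
    (* kernel *)
    and K_meas: "(\<lambda>w. K (fst w) (snd w)) \<in> borel_measurable M2"
    and K_nonneg: "\<And>x y. K x y \<ge> 0"
    and K1_sym: "\<And>x y. K y x = K x y"
    and K1_trans: "\<And>x y w. K (x + w) (y + w) = K x y"
    and K1_rot: "\<And>x y (R :: real^'n^'n). orthogonal_matrix R \<Longrightarrow> det R = 1 \<Longrightarrow>
                    K (R *v x) (R *v y) = K x y"
    and K2: "(\<integral>\<^sup>+ h. ennreal (norm h * K h 0) \<partial>lborel) < \<infinity>"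
    and K3_par: "0 < s1" "s1 < 1/2" "1/2 < s2" "s2 < 1" "\<delta> > 0" "0 < \<kappa>1" "\<kappa>1 \<le> \<kappa>2"
    and K3_low: "\<And>x y. x \<noteq> y \<Longrightarrow>
        \<kappa>1 * indicator {0<..<\<delta>} (dist x y) * dist x y powr (- (real CARD('n) + 2 * s1)) \<le> K x y"
    and K3_up: "\<And>x y. x \<noteq> y \<Longrightarrow>
        K x y \<le> \<kappa>2 * min (dist x y powr (- (real CARD('n) + 2 * s1)))
                            (dist x y powr (- (real CARD('n) + 2 * s2)))"
    and K4: "\<kappa>3 > 0" "\<And>x y. x \<in> cubeQ \<Longrightarrow> y \<in> cubeQ \<Longrightarrow> K x y \<ge> \<kappa>3"
    (* forcing term *)
    and g_meas: "g \<in> borel_measurable lborel"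
    and g_bdd: "\<exists>B. AE x in lborel. \<bar>g x\<bar> \<le> B"
    and g_per: "periodic_ae g"
    and g_mean: "(LINT x:cubeQ|lborel. g x) = 0"
    (* minimizer *)
    and u_W: "u \<in> cellW"
    and u_Lq: "set_integrable lborel cubeQ
                 (\<lambda>x. \<bar>u x\<bar> powr (real CARD('n) / (real CARD('n) - 2 * s1)))"
    and u_min: "\<And>v. v \<in> cellW \<Longrightarrow> energy K g p u \<le> energy K g p v"
    and u_fin: "energy K g p u < \<infinity>"
    (* calibration z *)
    and z_meas: "z \<in> borel_measurable M2"
    and z_range: "\<And>w. z w \<in> {-1..1}"
    and z_a: "\<And>\<eta>. smooth_fun \<eta> \<Longrightarrow> (\<forall>k\<in>intvecs. \<forall>x. \<eta> (x + k) = \<eta> x) \<Longrightarrow>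
        (LINT w:(cubeQ \<times> UNIV)|M2. 1/2 * z w * (\<eta> (fst w) - \<eta> (snd w)) * K (fst w) (snd w))
        + (LINT x:cubeQ|lborel. g x * \<eta> x) = 0"
    and z_b: "AE w in M2. u (fst w) - u (snd w) + p \<bullet> (fst w - snd w)
                 = z w * \<bar>u (fst w) - u (snd w) + p \<bullet> (fst w - snd w)\<bar>"
    and z_c: "AE w in M2. z w = - z (snd w, fst w)"
    and z_d: "\<And>k. k \<in> intvecs \<Longrightarrow> AE w in M2. z (fst w + k, snd w + k) = z w"
  shows "\<And>\<eta>. smooth_fun \<eta> \<Longrightarrow> compact (closure {x. \<eta> x \<noteq> 0}) \<Longrightarrow>
        (LINT w|M2. 1/2 * z w * (\<eta> (fst w) - \<eta> (snd w)) * K (fst w) (snd w))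
        + (LINT x|lborel. g x * \<eta> x) = 0"
proof -
  fix \<eta> :: "real^'n \<Rightarrow> real"
  assume sm: "smooth_fun \<eta>" and cpt: "compact (closure {x. \<eta> x \<noteq> 0})"
  have e1: "(LINT w|M2. 1/2 * z w * (\<eta> (fst w) - \<eta> (snd w)) * K (fst w) (snd w)) =
         (LINT w:(cubeQ \<times> UNIV)|M2. 1/2 * z w * (per \<eta> (fst w) - per \<eta> (snd w)) * K (fst w) (snd w))"
    by (rule E1[OF K_meas K_nonneg K1_sym K1_trans K2 z_meas z_range z_d sm cpt])
  have e2: "(LINT x|lborel. g x * \<eta> x) = (LINT x:cubeQ|lborel. g x * per \<eta> x)"
    by (rule E2[OF g_meas g_bdd g_per sm cpt])
  have per: "\<forall>k\<in>intvecs. \<forall>x. per \<eta> (x + k) = per \<eta> x" using per_periodic by blast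
  have za: "(LINT w:(cubeQ \<times> UNIV)|M2. 1/2 * z w * (per \<eta> (fst w) - per \<eta> (snd w)) * K (fst w) (snd w))
        + (LINT x:cubeQ|lborel. g x * per \<eta> x) = 0"
    by (rule z_a[OF per_smooth[OF sm cpt] per])
  show "(LINT w|M2. 1/2 * z w * (\<eta> (fst w) - \<eta> (snd w)) * K (fst w) (snd w))
        + (LINT x|lborel. g x * \<eta> x) = 0"
    using e1 e2 za by simp
qed

end
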